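(* There exists a constant $C$ (independent of $T$, $\nu$, $u$, $v$) such that for all $\nu>0$, $T>0$ and $u,v\in L^2([0,T];\chi^0)$, $$\|B(u,v)\|_{L^2([0,T];\chi^{0})}\leq \frac{C}{\nu^{1/2}}\|u\|_{L^2([0,T];\chi^{0})}\|v\|_{L^2([0,T];\chi^{0})}.$$
   Context: For $i\in\{-1,0,1\}$, $\chi^{i}=\{f\in\mathcal{S}'(\mathbb{R}^3;\mathbb{R}^3) : \|f\|_{\chi^i}:=\int_{\mathbb{R}^3}|\xi|^{i}|\hat f(\xi)|\,d\xi<\infty\}$. The bilinear operator $Q$ is $Q^j(u,v)=\sum_{k,l,m=1}^3 q^{j,m}_{k,l}\,\partial_m(u^kv^l)$, $j=1,2,3$, with $q^{j,m}_{k,l}(a)=\sum_{n,p=1}^3 a^{j,m,p,n}_{k,l}\,\mathcal{F}^{-1}\big(\tfrac{\xi_n\xi_p}{|\xi|^2}\hat a(\xi)\big)$ and $a^{j,m,p,n}_{k,l}$ fixed real numbers. $B(u,v)$ denotes the solution of the heat equation $\partial_t B(u,v)-\nu\Delta B(u,v)=Q(u,v)$, $B(u,v)|_{t=0}=0$, i.e. $B(u,v)(t)=\int_0^t e^{\nu(t-s)\Delta}Q(u,v)(s)\,ds$. *)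

theory Defs
  imports "HOL-Analysis.Analysis"
begin

text \<open>Everything is represented on the Fourier side.  A (time-dependent) vector field
  f(t) : R^3 -> R^3 is represented by its Fourier transform
  fh t xi = hat f(t)(xi) :: complex^3, with the convention
  hat f(xi) = int exp(-i x.xi) f(x) dx, so that hat(fg) = (2 pi)^(-3) (hat f * hat g).\<close>

definition chi0_norm :: "(real^3 \<Rightarrow> complex^3) \<Rightarrow> ennreal" where
  "chi0_norm fh = (\<integral>\<^sup>+ \<xi>. ennreal (norm (fh \<xi>)) \<partial>lborel)"

definition L2chi0_sq :: "real \<Rightarrow> (real \<Rightarrow> real^3 \<Rightarrow> complex^3) \<Rightarrow> ennreal" where
  "L2chi0_sq T fh = (\<integral>\<^sup>+ t. indicator {0..T} t * (chi0_norm (fh t))\<^sup>2 \<partial>lborel)"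

text \<open>The L^2([0,T]; chi^0) norm (meaningful when L2chi0_sq is finite).\<close>
definition L2chi0_norm :: "real \<Rightarrow> (real \<Rightarrow> real^3 \<Rightarrow> complex^3) \<Rightarrow> real" where
  "L2chi0_norm T fh = sqrt (enn2real (L2chi0_sq T fh))"

text \<open>Membership in L^2([0,T]; chi^0) of real (R^3-valued) fields, on the Fourier side:
  jointly measurable representative, finite norm, and Hermitian symmetry of the
  Fourier transform (real-valuedness) for a.e. t in [0,T].\<close>
definition in_L2chi0 :: "real \<Rightarrow> (real \<Rightarrow> real^3 \<Rightarrow> complex^3) \<Rightarrow> bool" where
  "in_L2chi0 T fh \<longleftrightarrow>
     (\<lambda>p. fh (fst p) (snd p)) \<in> borel_measurable (restrict_space borel ({0..T} \<times> UNIV))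
   \<and> L2chi0_sq T fh < \<infinity>
   \<and> (AE t in lborel. t \<in> {0..T} \<longrightarrow>
        (AE \<xi> in lborel. fh t (- \<xi>) = (\<chi> i. cnj (fh t \<xi> $ i))))"

definition conv3 :: "(real^3 \<Rightarrow> complex) \<Rightarrow> (real^3 \<Rightarrow> complex) \<Rightarrow> real^3 \<Rightarrow> complex" where
  "conv3 f g \<xi> = (\<integral>\<eta>. f (\<xi> - \<eta>) * g \<eta> \<partial>lborel)"

text \<open>Fourier transform of Q(u,v)(s):
  hat Q^j(xi) = sum_{k,l,m} sum_{n,p} a^{j,m,p,n}_{k,l} (xi_n xi_p/|xi|^2) (i xi_m) hat(u^k v^l)(xi),
  the coefficients a^{j,m,p,n}_{k,l} being given as  a j m p n k l.\<close>
definition Qhat :: "(3 \<Rightarrow> 3 \<Rightarrow> 3 \<Rightarrow> 3 \<Rightarrow> 3 \<Rightarrow> 3 \<Rightarrow> real)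
    \<Rightarrow> (real \<Rightarrow> real^3 \<Rightarrow> complex^3) \<Rightarrow> (real \<Rightarrow> real^3 \<Rightarrow> complex^3)
    \<Rightarrow> real \<Rightarrow> real^3 \<Rightarrow> complex^3" where
  "Qhat a uh vh s \<xi> = (\<chi> j. \<Sum>k\<in>UNIV. \<Sum>l\<in>UNIV. \<Sum>m\<in>UNIV. \<Sum>n\<in>UNIV. \<Sum>p\<in>UNIV.
      complex_of_real (a j m p n k l * (\<xi> $ n * \<xi> $ p / (norm \<xi>)\<^sup>2))
      * (\<i> * complex_of_real (\<xi> $ m))
      * (complex_of_real (1 / (2 * pi) ^ 3)
         * conv3 (\<lambda>\<eta>. uh s \<eta> $ k) (\<lambda>\<eta>. vh s \<eta> $ l) \<xi>))"

text \<open>Fourier transform of B(u,v)(t) = int_0^t e^{nu (t-s) Delta} Q(u,v)(s) ds.\<close>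
definition Bhat :: "(3 \<Rightarrow> 3 \<Rightarrow> 3 \<Rightarrow> 3 \<Rightarrow> 3 \<Rightarrow> 3 \<Rightarrow> real) \<Rightarrow> real
    \<Rightarrow> (real \<Rightarrow> real^3 \<Rightarrow> complex^3) \<Rightarrow> (real \<Rightarrow> real^3 \<Rightarrow> complex^3)
    \<Rightarrow> real \<Rightarrow> real^3 \<Rightarrow> complex^3" where
  "Bhat a \<nu> uh vh t \<xi> = (\<chi> j. (LINT s:{0..t}|lborel.
      complex_of_real (exp (- \<nu> * (t - s) * (norm \<xi>)\<^sup>2)) * Qhat a uh vh s \<xi> $ j))"

end

theory Submission
  imports Defs
begin


lemma exp_int:
  fixes a s :: real assumes a: "a > 0"
  shows "(\<integral>\<^sup>+t. ennreal (exp (-a*(t-s))) * indicator {s..} t \<partial>lborel) = ennreal (1/a)"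
proof -
  have "(\<integral>\<^sup>+t. ennreal (exp (-a*(t-s))) * indicator {s..} t \<partial>lborel)
      = (\<integral>\<^sup>+t. ennreal (exp (a * s)) * (ennreal (exp (-a*t)) * indicator {s..} t) \<partial>lborel)"
    by (intro nn_integral_cong) (simp add: ennreal_mult[symmetric] exp_add[symmetric] algebra_simps)
  also have "\<dots> = ennreal (exp (a * s)) * (\<integral>\<^sup>+t. ennreal (exp (-a*t)) * indicator {s..} t \<partial>lborel)"
    by (rule nn_integral_cmult) simp
  also have "(\<integral>\<^sup>+t. ennreal (exp (-a*t)) * indicator {s..} t \<partial>lborel) = ennreal (exp (-a * s)/a)"
    by (rule nn_integral_has_integral_lebesgue') (use has_integral_exp_minus_to_infinity[OF a, of s] in auto)
  also have "ennreal (exp (a * s)) * ennreal (exp (-a * s)/a) = ennreal (1/a)"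
    using a by (simp add: ennreal_mult[symmetric] exp_minus field_simps)
  finally show ?thesis .
qed

lemma k_int:
  fixes \<nu> T s :: real and \<xi> :: "real^3" assumes nu: "\<nu> > 0"
  shows "(\<integral>\<^sup>+t. indicator {0..T} t * (ennreal (if 0 \<le> s \<and> s \<le> t then exp (-\<nu>*(t-s)*(norm \<xi>)\<^sup>2) * norm \<xi> else 0))\<^sup>2 \<partial>lborel)
     \<le> ennreal (1/(2*\<nu>))"
proof (cases "\<xi> = 0")
  case True
  have z: "\<And>t. indicator {0..T} t * (ennreal (if 0 \<le> s \<and> s \<le> t then exp (-\<nu>*(t-s)*(norm \<xi>)\<^sup>2) * norm \<xi> else 0))\<^sup>2 = (0::ennreal)" using True by simp
  have "(\<integral>\<^sup>+t. indicator {0..T} t * (ennreal (if 0 \<le> s \<and> s \<le> t then exp (-\<nu>*(t-s)*(norm \<xi>)\<^sup>2) * norm \<xi> else 0))\<^sup>2 \<partial>lborel) = (\<integral>\<^sup>+(t::real). 0 \<partial>lborel)" by (simp only: z)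
  then show ?thesis by simp
next
  case False
  define a where "a = 2*\<nu>*(norm \<xi>)\<^sup>2"
  have a: "a > 0" using False nu by (simp add: a_def)
  have "(\<integral>\<^sup>+t. indicator {0..T} t * (ennreal (if 0 \<le> s \<and> s \<le> t then exp (-\<nu>*(t-s)*(norm \<xi>)\<^sup>2) * norm \<xi> else 0))\<^sup>2 \<partial>lborel)
     \<le> (\<integral>\<^sup>+t. ennreal ((norm \<xi>)\<^sup>2) * (ennreal (exp (-a*(t-s))) * indicator {s..} t) \<partial>lborel)"
  proof (intro nn_integral_mono)
    fix t
    show "indicator {0..T} t * (ennreal (if 0 \<le> s \<and> s \<le> t then exp (-\<nu>*(t-s)*(norm \<xi>)\<^sup>2) * norm \<xi> else 0))\<^sup>2
        \<le> ennreal ((norm \<xi>)\<^sup>2) * (ennreal (exp (-a*(t-s))) * indicator {s..} t)"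
    proof (cases "0 \<le> s \<and> s \<le> t")
      case True
      have "(exp (-\<nu>*(t-s)*(norm \<xi>)\<^sup>2) * norm \<xi>)\<^sup>2 = (norm \<xi>)\<^sup>2 * exp (-a*(t-s))"
        by (simp add: a_def power_mult_distrib exp_double[symmetric] power2_eq_square algebra_simps flip: exp_add)
      then show ?thesis using True
        by (auto simp: indicator_def ennreal_power ennreal_mult[symmetric])
    qed (auto simp: indicator_def)
  qed
  also have "\<dots> = ennreal ((norm \<xi>)\<^sup>2) * ennreal (1/a)"
    using exp_int[OF a, of s] by (subst nn_integral_cmult) auto
  also have "\<dots> = ennreal (1/(2*\<nu>))"
  proof -
    have "(norm \<xi>)\<^sup>2 * (1/a) = 1/(2*\<nu>)" using False nu by (simp add: a_def field_simps)
    then show ?thesis using a by (simp add: ennreal_mult[symmetric])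
  qed
  finally show ?thesis .
qed




definition uext :: "real \<Rightarrow> (real \<Rightarrow> real^3 \<Rightarrow> complex^3) \<Rightarrow> real \<times> (real^3) \<Rightarrow> real" where
  "uext T uh p = (if fst p \<in> {0..T} then norm (uh (fst p) (snd p)) else 0)"

lemma uext_meas_borel:
  assumes "in_L2chi0 T uh"
  shows "uext T uh \<in> borel_measurable borel"
proof -
  have g: "(\<lambda>p. uh (fst p) (snd p)) \<in> borel_measurable (restrict_space borel ({0..T} \<times> UNIV))"
    using assms by (simp add: in_L2chi0_def)
  have cl: "({0..T} \<times> (UNIV::(real^3) set)) \<inter> space borel \<in> sets borel"
    by (auto intro!: borel_closed closed_Times)
  have "(\<lambda>p. if p \<in> {0..T} \<times> UNIV then uh (fst p) (snd p) else 0) \<in> borel_measurable borel"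
    using g measurable_restrict_space_iff[OF cl, of 0 borel "\<lambda>p. uh (fst p) (snd p)"] by simp
  then have "(\<lambda>p. norm (if p \<in> {0..T} \<times> UNIV then uh (fst p) (snd p) else 0)) \<in> borel_measurable borel"
    by measurable
  moreover have "(\<lambda>p. norm (if p \<in> {0..T} \<times> UNIV then uh (fst p) (snd p) else 0)) = uext T uh"
    by (auto simp: uext_def fun_eq_iff mem_Times_iff)
  ultimately show ?thesis by simp
qed

lemma uext_meas[measurable]:
  assumes "in_L2chi0 T uh"
  shows "uext T uh \<in> borel_measurable (lborel \<Otimes>\<^sub>M lborel)"
  using uext_meas_borel[OF assms] by (simp add: lborel_prod)

definition cf :: "real \<Rightarrow> (real \<Rightarrow> real^3 \<Rightarrow> complex^3) \<Rightarrow> (real \<Rightarrow> real^3 \<Rightarrow> complex^3) \<Rightarrow> (real^3) \<times> real \<Rightarrow> ennreal" where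
  "cf T uh vh p = (\<integral>\<^sup>+\<eta>. ennreal (uext T uh (snd p, fst p - \<eta>)) * ennreal (uext T vh (snd p, \<eta>)) \<partial>lborel)"

lemma cf_meas[measurable]:
  assumes [measurable]: "in_L2chi0 T uh" "in_L2chi0 T vh"
  shows "cf T uh vh \<in> borel_measurable (lborel \<Otimes>\<^sub>M lborel)"
  unfolding cf_def by measurable




lemma norm_int_le:
  "ennreal (norm (integral\<^sup>L M f)) \<le> (\<integral>\<^sup>+x. ennreal (norm (f x)) \<partial>M)"
proof (cases "integrable M f")
  case True then show ?thesis by (rule integral_norm_bound_ennreal)
next
  case False then show ?thesis by (simp add: not_integrable_integral_eq)
qed

lemma enn_norm_sum_le:
  fixes f :: "'i \<Rightarrow> 'b::real_normed_vector"
  shows "ennreal (norm (sum f A)) \<le> (\<Sum>i\<in>A. ennreal (norm (f i)))"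
proof -
  have "ennreal (norm (sum f A)) \<le> ennreal (\<Sum>i\<in>A. norm (f i))"
    by (intro ennreal_leI norm_sum)
  also have "\<dots> = (\<Sum>i\<in>A. ennreal (norm (f i)))" by simp
  finally show ?thesis .
qed

lemma norm_vec_le_sum:
  fixes x :: "'a::real_normed_vector^'n"
  shows "norm x \<le> (\<Sum>i\<in>UNIV. norm (x $ i))"
  unfolding norm_vec_def by (rule L2_set_le_sum) simp

lemma conv_bound:
  assumes s: "0 \<le> s" "s \<le> T"
  shows "ennreal (norm (conv3 (\<lambda>\<eta>. uh s \<eta> $ k) (\<lambda>\<eta>. vh s \<eta> $ l) \<xi>)) \<le> cf T uh vh (\<xi>, s)"
proof -
  have "ennreal (norm (conv3 (\<lambda>\<eta>. uh s \<eta> $ k) (\<lambda>\<eta>. vh s \<eta> $ l) \<xi>))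
     \<le> (\<integral>\<^sup>+\<eta>. ennreal (norm (uh s (\<xi> - \<eta>) $ k * vh s \<eta> $ l)) \<partial>lborel)"
    unfolding conv3_def by (rule norm_int_le)
  also have "\<dots> \<le> cf T uh vh (\<xi>, s)"
    unfolding cf_def
  proof (intro nn_integral_mono)
    fix \<eta>
    have "norm (uh s (\<xi> - \<eta>) $ k * vh s \<eta> $ l) \<le> norm (uh s (\<xi> - \<eta>)) * norm (vh s \<eta>)"
      unfolding norm_mult by (intro mult_mono Finite_Cartesian_Product.norm_nth_le) auto
    then show "ennreal (norm (uh s (\<xi> - \<eta>) $ k * vh s \<eta> $ l))
        \<le> ennreal (uext T uh (snd (\<xi>, s), fst (\<xi>, s) - \<eta>)) * ennreal (uext T vh (snd (\<xi>, s), \<eta>))"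
      using s by (simp add: uext_def ennreal_mult[symmetric] ennreal_leI)
  qed
  finally show ?thesis .
qed

definition cc :: "(3 \<Rightarrow> 3 \<Rightarrow> 3 \<Rightarrow> 3 \<Rightarrow> 3 \<Rightarrow> 3 \<Rightarrow> real) \<Rightarrow> 3 \<Rightarrow> 3 \<Rightarrow> 3 \<Rightarrow> 3 \<Rightarrow> 3 \<Rightarrow> 3 \<Rightarrow> real" where
  "cc a j k l m n p = \<bar>a j m p n k l\<bar> / (2*pi)^3"

definition K0 :: "(3 \<Rightarrow> 3 \<Rightarrow> 3 \<Rightarrow> 3 \<Rightarrow> 3 \<Rightarrow> 3 \<Rightarrow> real) \<Rightarrow> real" where
  "K0 a = (\<Sum>j\<in>UNIV. \<Sum>k\<in>UNIV. \<Sum>l\<in>UNIV. \<Sum>m\<in>UNIV. \<Sum>n\<in>UNIV. \<Sum>p\<in>UNIV. cc a j k l m n p)"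

lemma K0_nonneg: "K0 a \<ge> 0"
  unfolding K0_def cc_def by (intro sum_nonneg) auto

lemma term_bound:
  fixes \<xi> :: "real^3"
  shows "norm (complex_of_real (a j m p n k l * (\<xi> $ n * \<xi> $ p / (norm \<xi>)\<^sup>2))
      * (\<i> * complex_of_real (\<xi> $ m)) * (complex_of_real (1 / (2 * pi) ^ 3) * z))
    \<le> cc a j k l m n p * norm \<xi> * norm z"
proof -
  have q: "\<bar>\<xi> $ n * \<xi> $ p / (norm \<xi>)\<^sup>2\<bar> \<le> 1"
  proof (cases "\<xi> = 0")
    case False
    have "\<bar>\<xi> $ n * \<xi> $ p\<bar> \<le> norm \<xi> * norm \<xi>"
      unfolding abs_mult by (intro mult_mono component_le_norm_cart) auto
    then show ?thesis using False by (simp add: abs_div power2_eq_square divide_le_eq_1)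
  qed simp
  have "norm (complex_of_real (a j m p n k l * (\<xi> $ n * \<xi> $ p / (norm \<xi>)\<^sup>2))
      * (\<i> * complex_of_real (\<xi> $ m)) * (complex_of_real (1 / (2 * pi) ^ 3) * z))
     = \<bar>a j m p n k l\<bar> * \<bar>\<xi> $ n * \<xi> $ p / (norm \<xi>)\<^sup>2\<bar> * \<bar>\<xi> $ m\<bar> * (1 / (2*pi)^3) * norm z"
    unfolding norm_mult norm_of_real norm_ii by (simp add: abs_mult)
  also have "\<dots> \<le> \<bar>a j m p n k l\<bar> * 1 * norm \<xi> * (1 / (2*pi)^3) * norm z"
    by (intro mult_right_mono mult_mono q component_le_norm_cart) auto
  also have "\<dots> = cc a j k l m n p * norm \<xi> * norm z"
    by (simp add: cc_def)
  finally show ?thesis .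
qed

lemma Q_bound:
  assumes s: "0 \<le> s" "s \<le> T"
  shows "ennreal (norm (Qhat a uh vh s \<xi> $ j)) \<le> ennreal (K0 a * norm \<xi>) * cf T uh vh (\<xi>, s)"
proof -
  have "ennreal (norm (Qhat a uh vh s \<xi> $ j)) \<le>
     (\<Sum>k\<in>UNIV. \<Sum>l\<in>UNIV. \<Sum>m\<in>UNIV. \<Sum>n\<in>UNIV. \<Sum>p\<in>UNIV.
       ennreal (norm (complex_of_real (a j m p n k l * (\<xi> $ n * \<xi> $ p / (norm \<xi>)\<^sup>2))
      * (\<i> * complex_of_real (\<xi> $ m))
      * (complex_of_real (1 / (2 * pi) ^ 3)
         * conv3 (\<lambda>\<eta>. uh s \<eta> $ k) (\<lambda>\<eta>. vh s \<eta> $ l) \<xi>))))"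
    unfolding Qhat_def vec_lambda_beta
    by (intro order_trans[OF enn_norm_sum_le] sum_mono enn_norm_sum_le)
  also have "\<dots> \<le> (\<Sum>k\<in>UNIV. \<Sum>l\<in>UNIV. \<Sum>m\<in>UNIV. \<Sum>n\<in>UNIV. \<Sum>p\<in>UNIV.
       ennreal (cc a j k l m n p * norm \<xi>) * cf T uh vh (\<xi>, s))"
  proof (intro sum_mono)
    fix k l m n p
    have "ennreal (norm (complex_of_real (a j m p n k l * (\<xi> $ n * \<xi> $ p / (norm \<xi>)\<^sup>2))
      * (\<i> * complex_of_real (\<xi> $ m))
      * (complex_of_real (1 / (2 * pi) ^ 3)
         * conv3 (\<lambda>\<eta>. uh s \<eta> $ k) (\<lambda>\<eta>. vh s \<eta> $ l) \<xi>)))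
      \<le> ennreal (cc a j k l m n p * norm \<xi> * norm (conv3 (\<lambda>\<eta>. uh s \<eta> $ k) (\<lambda>\<eta>. vh s \<eta> $ l) \<xi>))"
      by (intro ennreal_leI term_bound)
    also have "\<dots> = ennreal (cc a j k l m n p * norm \<xi>) * ennreal (norm (conv3 (\<lambda>\<eta>. uh s \<eta> $ k) (\<lambda>\<eta>. vh s \<eta> $ l) \<xi>))"
      by (rule ennreal_mult) (auto simp: cc_def)
    also have "\<dots> \<le> ennreal (cc a j k l m n p * norm \<xi>) * cf T uh vh (\<xi>, s)"
      by (intro mult_left_mono conv_bound s) auto
    finally show "ennreal (norm (complex_of_real (a j m p n k l * (\<xi> $ n * \<xi> $ p / (norm \<xi>)\<^sup>2))
      * (\<i> * complex_of_real (\<xi> $ m))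
      * (complex_of_real (1 / (2 * pi) ^ 3)
         * conv3 (\<lambda>\<eta>. uh s \<eta> $ k) (\<lambda>\<eta>. vh s \<eta> $ l) \<xi>)))
      \<le> ennreal (cc a j k l m n p * norm \<xi>) * cf T uh vh (\<xi>, s)" .
  qed
  also have "\<dots> = ennreal (\<Sum>k\<in>UNIV. \<Sum>l\<in>UNIV. \<Sum>m\<in>UNIV. \<Sum>n\<in>UNIV. \<Sum>p\<in>UNIV.
       cc a j k l m n p * norm \<xi>) * cf T uh vh (\<xi>, s)"
    by (simp only: sum_distrib_right[symmetric]) (simp add: cc_def sum_nonneg sum_distrib_right)
  also have "\<dots> \<le> ennreal (K0 a * norm \<xi>) * cf T uh vh (\<xi>, s)"
  proof (intro mult_right_mono ennreal_leI)
    have "(\<Sum>k\<in>UNIV. \<Sum>l\<in>UNIV. \<Sum>m\<in>UNIV. \<Sum>n\<in>UNIV. \<Sum>p\<in>UNIV. cc a j k l m n p)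
       \<le> K0 a" unfolding K0_def
      by (rule member_le_sum[where f="\<lambda>j. \<Sum>k\<in>UNIV. \<Sum>l\<in>UNIV. \<Sum>m\<in>UNIV. \<Sum>n\<in>UNIV. \<Sum>p\<in>UNIV. cc a j k l m n p"])
        (auto simp: cc_def intro!: sum_nonneg)
    then show "(\<Sum>k\<in>UNIV. \<Sum>l\<in>UNIV. \<Sum>m\<in>UNIV. \<Sum>n\<in>UNIV. \<Sum>p\<in>UNIV. cc a j k l m n p * norm \<xi>) \<le> K0 a * norm \<xi>"
      by (simp add: sum_distrib_right[symmetric] mult_right_mono)
  qed simp
  finally show ?thesis .
qed




definition kk :: "real \<Rightarrow> real \<Rightarrow> (real^3) \<times> real \<Rightarrow> real" where
  "kk \<nu> t p = (if 0 \<le> snd p \<and> snd p \<le> t then exp (-\<nu>*(t - snd p)*(norm (fst p))\<^sup>2) * norm (fst p) else 0)"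

lemma kk_nonneg: "kk \<nu> t p \<ge> 0" by (simp add: kk_def)

lemma kk_measP: "kk \<nu> t \<in> borel_measurable (lborel \<Otimes>\<^sub>M lborel)"
  unfolding kk_def[abs_def] by measurable

lemma kk_meas[measurable]: "kk \<nu> t \<in> borel_measurable borel"
  using kk_measP by (simp add: lborel_prod)

lemma kk_meas2P: "(\<lambda>x. kk \<nu> (fst x) (snd x)) \<in> borel_measurable (lborel \<Otimes>\<^sub>M (lborel \<Otimes>\<^sub>M lborel))"
  unfolding kk_def[abs_def] by measurable

lemma kk_meas2[measurable]: "(\<lambda>x. kk \<nu> (fst x) (snd x)) \<in> borel_measurable borel"
  using kk_meas2P by (simp add: lborel_prod)

lemma cf_meas_borel[measurable]:
  assumes "in_L2chi0 T uh" "in_L2chi0 T vh"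
  shows "cf T uh vh \<in> borel_measurable borel"
  using cf_meas[OF assms] by (simp add: lborel_prod)

lemma Bj_bound:
  assumes tT: "t \<le> T" and [measurable]: "in_L2chi0 T uh" "in_L2chi0 T vh"
  shows "ennreal (norm (Bhat a \<nu> uh vh t \<xi> $ j))
    \<le> ennreal (K0 a) * (\<integral>\<^sup>+s. ennreal (kk \<nu> t (\<xi>, s)) * cf T uh vh (\<xi>, s) \<partial>lborel)"
proof -
  have "ennreal (norm (Bhat a \<nu> uh vh t \<xi> $ j))
     \<le> (\<integral>\<^sup>+s. ennreal (norm (indicator {0..t} s *\<^sub>R (complex_of_real (exp (- \<nu> * (t - s) * (norm \<xi>)\<^sup>2)) * Qhat a uh vh s \<xi> $ j))) \<partial>lborel)"
    unfolding Bhat_def vec_lambda_beta set_lebesgue_integral_def by (rule norm_int_le)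
  also have "\<dots> \<le> (\<integral>\<^sup>+s. ennreal (K0 a) * (ennreal (kk \<nu> t (\<xi>, s)) * cf T uh vh (\<xi>, s)) \<partial>lborel)"
  proof (intro nn_integral_mono)
    fix s
    show "ennreal (norm (indicator {0..t} s *\<^sub>R (complex_of_real (exp (- \<nu> * (t - s) * (norm \<xi>)\<^sup>2)) * Qhat a uh vh s \<xi> $ j)))
       \<le> ennreal (K0 a) * (ennreal (kk \<nu> t (\<xi>, s)) * cf T uh vh (\<xi>, s))"
    proof (cases "0 \<le> s \<and> s \<le> t")
      case True
      have "ennreal (norm (indicator {0..t} s *\<^sub>R (complex_of_real (exp (- \<nu> * (t - s) * (norm \<xi>)\<^sup>2)) * Qhat a uh vh s \<xi> $ j)))
          = ennreal (exp (- \<nu> * (t - s) * (norm \<xi>)\<^sup>2)) * ennreal (norm (Qhat a uh vh s \<xi> $ j))"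
        using True by (simp add: norm_mult ennreal_mult)
      also have "\<dots> \<le> ennreal (exp (- \<nu> * (t - s) * (norm \<xi>)\<^sup>2)) * (ennreal (K0 a * norm \<xi>) * cf T uh vh (\<xi>, s))"
        using True tT by (intro mult_left_mono Q_bound) auto
      also have "\<dots> = ennreal (K0 a) * (ennreal (kk \<nu> t (\<xi>, s)) * cf T uh vh (\<xi>, s))"
        using True K0_nonneg[of a] by (simp add: kk_def ennreal_mult mult_ac)
      finally show ?thesis .
    qed (simp add: kk_def)
  qed
  also have "\<dots> = ennreal (K0 a) * (\<integral>\<^sup>+s. ennreal (kk \<nu> t (\<xi>, s)) * cf T uh vh (\<xi>, s) \<partial>lborel)"
    by (rule nn_integral_cmult) measurable
  finally show ?thesis .
qed

lemma B_bound:
  assumes tT: "t \<le> T" and uv: "in_L2chi0 T uh" "in_L2chi0 T vh"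
  shows "ennreal (norm (Bhat a \<nu> uh vh t \<xi>))
    \<le> ennreal (3 * K0 a) * (\<integral>\<^sup>+s. ennreal (kk \<nu> t (\<xi>, s)) * cf T uh vh (\<xi>, s) \<partial>lborel)"
proof -
  have "ennreal (norm (Bhat a \<nu> uh vh t \<xi>)) \<le> ennreal (\<Sum>j\<in>UNIV. norm (Bhat a \<nu> uh vh t \<xi> $ j))"
    by (intro ennreal_leI norm_vec_le_sum)
  also have "\<dots> = (\<Sum>j\<in>UNIV. ennreal (norm (Bhat a \<nu> uh vh t \<xi> $ j)))" by simp
  also have "\<dots> \<le> (\<Sum>j\<in>(UNIV::3 set). ennreal (K0 a) * (\<integral>\<^sup>+s. ennreal (kk \<nu> t (\<xi>, s)) * cf T uh vh (\<xi>, s) \<partial>lborel))"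
    by (intro sum_mono Bj_bound tT uv)
  also have "\<dots> = ennreal (3 * K0 a) * (\<integral>\<^sup>+s. ennreal (kk \<nu> t (\<xi>, s)) * cf T uh vh (\<xi>, s) \<partial>lborel)"
    using K0_nonneg[of a] by (simp add: ennreal_mult mult_ac)
  finally show ?thesis .
qed




lemma wCS:
  assumes [measurable]: "f \<in> borel_measurable M" "g \<in> borel_measurable M"
  shows "(\<integral>\<^sup>+x. g x * f x \<partial>M)\<^sup>2 \<le> (\<integral>\<^sup>+x. f x * (g x)\<^sup>2 \<partial>M) * (\<integral>\<^sup>+x. f x \<partial>M)"
proof -
  have "(\<integral>\<^sup>+x. g x * 1 \<partial>density M f)\<^sup>2 \<le> (\<integral>\<^sup>+x. (g x)\<^sup>2 \<partial>density M f) * (\<integral>\<^sup>+x. 1 ^ 2 \<partial>density M f)"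
    by (rule Cauchy_Schwarz_nn_integral) auto
  moreover have "(\<integral>\<^sup>+x. 1 ^ 2 \<partial>density M f) = (\<integral>\<^sup>+x. f x \<partial>M)"
    by (subst nn_integral_density) auto
  moreover have "(\<integral>\<^sup>+x. g x * 1 \<partial>density M f) = (\<integral>\<^sup>+x. g x * f x \<partial>M)"
    by (subst nn_integral_density) (auto simp: mult.commute)
  moreover have "(\<integral>\<^sup>+x. (g x)\<^sup>2 \<partial>density M f) = (\<integral>\<^sup>+x. f x * (g x)\<^sup>2 \<partial>M)"
    by (subst nn_integral_density) auto
  ultimately show ?thesis by simp
qed

definition HH where
  "HH \<nu> T uh vh t = (\<integral>\<^sup>+p. ennreal (kk \<nu> t p) * cf T uh vh p \<partial>lborel)"

lemma chi0_bound:
  assumes tT: "t \<le> T" and uv[measurable]: "in_L2chi0 T uh" "in_L2chi0 T vh"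
  shows "chi0_norm (Bhat a \<nu> uh vh t) \<le> ennreal (3 * K0 a) * HH \<nu> T uh vh t"
proof -
  note kk_measP[measurable]
  have [measurable]: "cf T uh vh \<in> borel_measurable (lborel \<Otimes>\<^sub>M lborel)" by (rule cf_meas[OF uv])
  have "chi0_norm (Bhat a \<nu> uh vh t) \<le>
     (\<integral>\<^sup>+\<xi>. ennreal (3 * K0 a) * (\<integral>\<^sup>+s. ennreal (kk \<nu> t (\<xi>, s)) * cf T uh vh (\<xi>, s) \<partial>lborel) \<partial>lborel)"
    unfolding chi0_norm_def by (intro nn_integral_mono B_bound tT uv)
  also have "\<dots> = ennreal (3 * K0 a) * (\<integral>\<^sup>+\<xi>. (\<integral>\<^sup>+s. ennreal (kk \<nu> t (\<xi>, s)) * cf T uh vh (\<xi>, s) \<partial>lborel) \<partial>lborel)"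
    by (rule nn_integral_cmult) measurable
  also have "(\<integral>\<^sup>+\<xi>. (\<integral>\<^sup>+s. ennreal (kk \<nu> t (\<xi>, s)) * cf T uh vh (\<xi>, s) \<partial>lborel) \<partial>lborel)
      = (\<integral>\<^sup>+p. ennreal (kk \<nu> t p) * cf T uh vh p \<partial>(lborel \<Otimes>\<^sub>M lborel))"
    by (rule lborel.nn_integral_fst[where f="\<lambda>p. ennreal (kk \<nu> t p) * cf T uh vh p"]) measurable
  also have "\<dots> = HH \<nu> T uh vh t"
    by (simp add: HH_def lborel_prod)
  finally show ?thesis .
qed

definition AA where "AA T uh vh = (\<integral>\<^sup>+p. cf T uh vh p \<partial>lborel)"

lemma HH_sq:
  assumes uv[measurable]: "in_L2chi0 T uh" "in_L2chi0 T vh"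
  shows "(HH \<nu> T uh vh t)\<^sup>2 \<le> (\<integral>\<^sup>+p. cf T uh vh p * (ennreal (kk \<nu> t p))\<^sup>2 \<partial>lborel) * AA T uh vh"
  unfolding HH_def AA_def by (rule wCS) measurable




lemma transl:
  fixes g :: "real^3 \<Rightarrow> ennreal"
  assumes [measurable]: "g \<in> borel_measurable borel"
  shows "(\<integral>\<^sup>+x. g (x - c) \<partial>lborel) = (\<integral>\<^sup>+x. g x \<partial>lborel)"
proof -
  have "(\<integral>\<^sup>+x. g x \<partial>lborel) = (\<integral>\<^sup>+x. g x \<partial>distr lborel borel ((+) (-c)))"
    by (simp add: lborel_distr_plus)
  also have "\<dots> = (\<integral>\<^sup>+x. g (-c + x) \<partial>lborel)"
    by (rule nn_integral_distr) auto
  finally show ?thesis by simp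
qed

definition Uu where "Uu T uh s = (\<integral>\<^sup>+\<xi>. ennreal (uext T uh (s, \<xi>)) \<partial>lborel)"

lemma Uu_meas[measurable]:
  assumes [measurable]: "in_L2chi0 T uh"
  shows "Uu T uh \<in> borel_measurable borel"
proof -
  have "Uu T uh \<in> borel_measurable lborel"
    unfolding Uu_def[abs_def] by measurable
  then show ?thesis by simp
qed

lemma Uu_eq: "Uu T uh s = indicator {0..T} s * chi0_norm (uh s)"
proof (cases "0 \<le> s \<and> s \<le> T")
  case True then show ?thesis by (simp add: Uu_def uext_def chi0_norm_def)
next
  case False
  then have "\<And>\<xi>. uext T uh (s, \<xi>) = 0" by (auto simp: uext_def)
  then show ?thesis using False by (simp add: Uu_def)
qed

lemma L2_eq: "(\<integral>\<^sup>+s. (Uu T uh s)\<^sup>2 \<partial>lborel) = L2chi0_sq T uh"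
  unfolding L2chi0_sq_def
  by (intro nn_integral_cong) (simp add: Uu_eq power_mult_distrib indicator_def)

lemma AA_eq:
  assumes uv[measurable]: "in_L2chi0 T uh" "in_L2chi0 T vh"
  shows "AA T uh vh = (\<integral>\<^sup>+s. Uu T uh s * Uu T vh s \<partial>lborel)"
proof -
  have [measurable]: "cf T uh vh \<in> borel_measurable (lborel \<Otimes>\<^sub>M lborel)" by (rule cf_meas[OF uv])
  have "AA T uh vh = (\<integral>\<^sup>+p. cf T uh vh p \<partial>(lborel \<Otimes>\<^sub>M lborel))"
    by (simp add: AA_def lborel_prod)
  also have "\<dots> = (\<integral>\<^sup>+s. \<integral>\<^sup>+\<xi>. cf T uh vh (\<xi>, s) \<partial>lborel \<partial>lborel)"
    by (rule lborel_pair.nn_integral_snd[symmetric]) measurable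
  also have "\<dots> = (\<integral>\<^sup>+s. Uu T uh s * Uu T vh s \<partial>lborel)"
  proof (intro nn_integral_cong)
    fix s :: real
    have "(\<integral>\<^sup>+\<xi>. cf T uh vh (\<xi>, s) \<partial>lborel)
      = (\<integral>\<^sup>+\<xi>. \<integral>\<^sup>+\<eta>. ennreal (uext T uh (s, \<xi> - \<eta>)) * ennreal (uext T vh (s, \<eta>)) \<partial>lborel \<partial>lborel)"
      by (simp add: cf_def)
    also have "\<dots> = (\<integral>\<^sup>+\<eta>. \<integral>\<^sup>+\<xi>. ennreal (uext T uh (s, \<xi> - \<eta>)) * ennreal (uext T vh (s, \<eta>)) \<partial>lborel \<partial>lborel)"
      by (rule lborel_pair.Fubini'[symmetric]) measurable
    also have "\<dots> = (\<integral>\<^sup>+\<eta>. Uu T uh s * ennreal (uext T vh (s, \<eta>)) \<partial>lborel)"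
    proof (intro nn_integral_cong)
      fix \<eta> :: "real^3"
      have "(\<integral>\<^sup>+\<xi>. ennreal (uext T uh (s, \<xi> - \<eta>)) * ennreal (uext T vh (s, \<eta>)) \<partial>lborel)
          = (\<integral>\<^sup>+\<xi>. ennreal (uext T uh (s, \<xi> - \<eta>)) \<partial>lborel) * ennreal (uext T vh (s, \<eta>))"
        by (rule nn_integral_multc) measurable
      also have "(\<integral>\<^sup>+\<xi>. ennreal (uext T uh (s, \<xi> - \<eta>)) \<partial>lborel) = Uu T uh s"
        unfolding Uu_def by (rule transl[where g="\<lambda>\<xi>. ennreal (uext T uh (s, \<xi>))"]) measurable
      finally show "(\<integral>\<^sup>+\<xi>. ennreal (uext T uh (s, \<xi> - \<eta>)) * ennreal (uext T vh (s, \<eta>)) \<partial>lborel)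
          = Uu T uh s * ennreal (uext T vh (s, \<eta>))" .
    qed
    also have "\<dots> = Uu T uh s * Uu T vh s"
      unfolding Uu_def by (rule nn_integral_cmult) measurable
    finally show "(\<integral>\<^sup>+\<xi>. cf T uh vh (\<xi>, s) \<partial>lborel) = Uu T uh s * Uu T vh s" .
  qed
  finally show ?thesis .
qed

lemma AA_sq:
  assumes uv[measurable]: "in_L2chi0 T uh" "in_L2chi0 T vh"
  shows "(AA T uh vh)\<^sup>2 \<le> L2chi0_sq T uh * L2chi0_sq T vh"
  unfolding AA_eq[OF uv] L2_eq[symmetric]
  by (rule Cauchy_Schwarz_nn_integral) measurable




lemma L2B_bound:
  assumes nu: "\<nu> > 0" and uv[measurable]: "in_L2chi0 T uh" "in_L2chi0 T vh"
  shows "L2chi0_sq T (Bhat a \<nu> uh vh) \<le> ennreal ((3 * K0 a)\<^sup>2) * AA T uh vh * (ennreal (1/(2*\<nu>)) * AA T uh vh)"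
proof -
  have [measurable]: "(\<lambda>x. kk \<nu> (fst x) (snd x)) \<in> borel_measurable ((lborel::real measure) \<Otimes>\<^sub>M (lborel::((real^3) \<times> real) measure))"
    using kk_meas2[of \<nu>] by (simp add: lborel_prod)
  then have [measurable]: "(\<lambda>x. kk \<nu> (snd x) (fst x)) \<in> borel_measurable ((lborel::((real^3) \<times> real) measure) \<Otimes>\<^sub>M (lborel::real measure))"
    by (drule_tac measurable_pair_swap) (simp add: case_prod_beta')
  have [measurable]: "cf T uh vh \<in> borel_measurable lborel" using cf_meas_borel[OF uv] by simp
  define G where "G t = (\<integral>\<^sup>+p. cf T uh vh p * (ennreal (kk \<nu> t p))\<^sup>2 \<partial>lborel)" for t
  have Gm[measurable]: "G \<in> borel_measurable lborel"
    unfolding G_def[abs_def] by measurable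
  have "L2chi0_sq T (Bhat a \<nu> uh vh) \<le> (\<integral>\<^sup>+t. ennreal ((3 * K0 a)\<^sup>2) * AA T uh vh * (indicator {0..T} t * G t) \<partial>lborel)"
    unfolding L2chi0_sq_def
  proof (intro nn_integral_mono)
    fix t :: real
    show "indicator {0..T} t * (chi0_norm (Bhat a \<nu> uh vh t))\<^sup>2
       \<le> ennreal ((3 * K0 a)\<^sup>2) * AA T uh vh * (indicator {0..T} t * G t)"
    proof (cases "t \<in> {0..T}")
      case True
      have "(chi0_norm (Bhat a \<nu> uh vh t))\<^sup>2 \<le> (ennreal (3 * K0 a) * HH \<nu> T uh vh t)\<^sup>2"
        using True by (intro power_mono chi0_bound uv) auto
      also have "\<dots> = ennreal ((3 * K0 a)\<^sup>2) * (HH \<nu> T uh vh t)\<^sup>2"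
        using K0_nonneg[of a] by (simp add: power_mult_distrib ennreal_power)
      also have "\<dots> \<le> ennreal ((3 * K0 a)\<^sup>2) * (G t * AA T uh vh)"
        unfolding G_def by (intro mult_left_mono HH_sq uv) auto
      finally show ?thesis using True by (simp add: mult_ac)
    qed simp
  qed
  also have "\<dots> = ennreal ((3 * K0 a)\<^sup>2) * AA T uh vh * (\<integral>\<^sup>+t. indicator {0..T} t * G t \<partial>lborel)"
    by (rule nn_integral_cmult) measurable
  also have "(\<integral>\<^sup>+t. indicator {0..T} t * G t \<partial>lborel)
      = (\<integral>\<^sup>+t. \<integral>\<^sup>+p. indicator {0..T} t * (cf T uh vh p * (ennreal (kk \<nu> t p))\<^sup>2) \<partial>lborel \<partial>lborel)"
    unfolding G_def by (intro nn_integral_cong nn_integral_cmult[symmetric]) measurable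
  also have "\<dots> = (\<integral>\<^sup>+p. \<integral>\<^sup>+t. indicator {0..T} t * (cf T uh vh p * (ennreal (kk \<nu> t p))\<^sup>2) \<partial>lborel \<partial>lborel)"
    by (rule lborel_pair.Fubini') measurable
  also have "\<dots> \<le> (\<integral>\<^sup>+p. cf T uh vh p * ennreal (1/(2*\<nu>)) \<partial>lborel)"
  proof (intro nn_integral_mono)
    fix p :: "(real^3) \<times> real"
    obtain \<xi> s where p: "p = (\<xi>, s)" by (cases p)
    have "(\<integral>\<^sup>+t. indicator {0..T} t * (cf T uh vh p * (ennreal (kk \<nu> t p))\<^sup>2) \<partial>lborel)
        = (\<integral>\<^sup>+t. cf T uh vh p * (indicator {0..T} t * (ennreal (kk \<nu> t p))\<^sup>2) \<partial>lborel)"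
      by (intro nn_integral_cong) (simp add: mult_ac)
    also have "\<dots> = cf T uh vh p * (\<integral>\<^sup>+t. indicator {0..T} t * (ennreal (kk \<nu> t p))\<^sup>2 \<partial>lborel)"
      by (rule nn_integral_cmult) (simp add: p kk_def)
    also have "\<dots> \<le> cf T uh vh p * ennreal (1/(2*\<nu>))"
      using k_int[OF nu, of T s \<xi>] by (intro mult_left_mono) (simp_all add: p kk_def cong: if_cong)
    finally show "(\<integral>\<^sup>+t. indicator {0..T} t * (cf T uh vh p * (ennreal (kk \<nu> t p))\<^sup>2) \<partial>lborel)
        \<le> cf T uh vh p * ennreal (1/(2*\<nu>))" .
  qed
  also have "\<dots> = ennreal (1/(2*\<nu>)) * AA T uh vh"
    unfolding AA_def by (subst nn_integral_multc) (auto simp: mult.commute)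
  finally show ?thesis by (simp add: mult_left_mono)
qed




theorem proposition2p2:
  fixes a :: "3 \<Rightarrow> 3 \<Rightarrow> 3 \<Rightarrow> 3 \<Rightarrow> 3 \<Rightarrow> 3 \<Rightarrow> real"
  shows "\<exists>C::real. \<forall>\<nu> T uh vh. \<nu> > 0 \<longrightarrow> T > 0 \<longrightarrow> in_L2chi0 T uh \<longrightarrow> in_L2chi0 T vh \<longrightarrow>
           L2chi0_sq T (Bhat a \<nu> uh vh) < \<infinity> \<and>
           L2chi0_norm T (Bhat a \<nu> uh vh)
             \<le> C / sqrt \<nu> * L2chi0_norm T uh * L2chi0_norm T vh"
proof (intro exI allI impI conjI)
  fix \<nu> T :: real and uh vh
  assume nu: "\<nu> > 0" and "T > 0" and uv: "in_L2chi0 T uh" "in_L2chi0 T vh"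
  define c where "c = (3 * K0 a)\<^sup>2 * (1/(2*\<nu>))"
  have c0: "c \<ge> 0" using nu by (simp add: c_def)
  have fu: "L2chi0_sq T uh < \<infinity>" and fv: "L2chi0_sq T vh < \<infinity>"
    using uv by (simp_all add: in_L2chi0_def)
  have "L2chi0_sq T (Bhat a \<nu> uh vh) \<le> ennreal ((3 * K0 a)\<^sup>2) * AA T uh vh * (ennreal (1/(2*\<nu>)) * AA T uh vh)"
    by (rule L2B_bound[OF nu uv])
  also have "\<dots> = ennreal c * (AA T uh vh)\<^sup>2"
  proof -
    have "ennreal c = ennreal ((3 * K0 a)\<^sup>2) * ennreal (1/(2*\<nu>))"
      unfolding c_def using nu by (intro ennreal_mult) auto
    then show ?thesis by (simp add: power2_eq_square mult_ac)
  qed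
  also have "\<dots> \<le> ennreal c * (L2chi0_sq T uh * L2chi0_sq T vh)"
    by (intro mult_left_mono AA_sq uv) simp
  finally have L: "L2chi0_sq T (Bhat a \<nu> uh vh) \<le> ennreal c * (L2chi0_sq T uh * L2chi0_sq T vh)" .
  have fin: "ennreal c * (L2chi0_sq T uh * L2chi0_sq T vh) < \<infinity>"
    using fu fv by (simp add: ennreal_mult_less_top)
  show "L2chi0_sq T (Bhat a \<nu> uh vh) < \<infinity>"
    using L fin by (rule le_less_trans)
  have "enn2real (L2chi0_sq T (Bhat a \<nu> uh vh)) \<le> enn2real (ennreal c * (L2chi0_sq T uh * L2chi0_sq T vh))"
    using L fin by (intro enn2real_mono) auto
  also have "\<dots> = c * (enn2real (L2chi0_sq T uh) * enn2real (L2chi0_sq T vh))"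
    using c0 by (simp add: enn2real_mult)
  finally have "sqrt (enn2real (L2chi0_sq T (Bhat a \<nu> uh vh)))
      \<le> sqrt (c * (enn2real (L2chi0_sq T uh) * enn2real (L2chi0_sq T vh)))"
    by (rule real_sqrt_le_mono)
  also have "\<dots> = sqrt c * L2chi0_norm T uh * L2chi0_norm T vh"
    by (simp add: L2chi0_norm_def real_sqrt_mult)
  also have "sqrt c = 3 * K0 a / sqrt 2 / sqrt \<nu>"
    using nu K0_nonneg[of a] by (simp add: c_def real_sqrt_mult real_sqrt_divide)
  finally show "L2chi0_norm T (Bhat a \<nu> uh vh) \<le> 3 * K0 a / sqrt 2 / sqrt \<nu> * L2chi0_norm T uh * L2chi0_norm T vh"
    by (simp add: L2chi0_norm_def)
qed


end
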